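(* Let $q$ be a prime power, $t\ge3$, and let $G_{PvP}=(V,E)$ be the Plane-vs-Plane graph over $\mathbb F_q^t$. Then for every nonempty subset $S\subseteq V$, $\Phi(S)\ge 1-\frac{|S|}{|V|}-\frac{3}{q}$.
   Context: The Plane-vs-Plane graph over $\mathbb F_q^t$ has as vertices all affine 2-dimensional subspaces (planes) of $\mathbb F_q^t$, and an undirected edge between two planes whenever their intersection is an affine line; it is regular. For $S\subseteq V$, the edge expansion is $\Phi(S)=\Pr_{(u,v)\in E}[v\notin S\mid u\in S]$, the probability that a uniformly random edge with an endpoint $u\in S$ has its other endpoint outside $S$. *)

theory Defs
  imports "HOL-Analysis.Finite_Cartesian_Product"
begin

text \<open>Points of F_q^t are vectors of type 'a ^ 'n, with 'a a finite field (so q = CARD('a)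
  is automatically a prime power) and t = CARD('n).\<close>

definition lin_indep2 :: "'a::field ^ 'n \<Rightarrow> 'a ^ 'n \<Rightarrow> bool" where
  "lin_indep2 u v \<longleftrightarrow> (\<forall>a b. (\<chi> i. a * u $ i + b * v $ i) = 0 \<longrightarrow> a = 0 \<and> b = 0)"

definition affine_plane :: "('a::field ^ 'n) set \<Rightarrow> bool" where
  "affine_plane P \<longleftrightarrow> (\<exists>p u v. lin_indep2 u v \<and>
     P = {\<chi> i. p $ i + a * u $ i + b * v $ i | a b. True})"

definition affine_line :: "('a::field ^ 'n) set \<Rightarrow> bool" where
  "affine_line L \<longleftrightarrow> (\<exists>p u. u \<noteq> 0 \<and> L = {\<chi> i. p $ i + a * u $ i | a. True})"

definition pvp_vertices :: "('a::field ^ 'n) set set" where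
  "pvp_vertices = {P. affine_plane P}"

definition pvp_edge :: "('a::field ^ 'n) set \<Rightarrow> ('a ^ 'n) set \<Rightarrow> bool" where
  "pvp_edge P Q \<longleftrightarrow> P \<in> pvp_vertices \<and> Q \<in> pvp_vertices \<and> affine_line (P \<inter> Q)"

definition pvp_expansion :: "('a::field ^ 'n) set set \<Rightarrow> real" where
  "pvp_expansion S =
     real (card {(P, Q). P \<in> S \<and> Q \<notin> S \<and> pvp_edge P Q})
     / real (card {(P, Q). P \<in> S \<and> pvp_edge P Q})"

end

theory Submission
  imports Defs "HOL-Analysis.Convex"
begin

lemma dc:
  assumes "finite A" "finite B"
  shows "(\<Sum>x\<in>A. card {y\<in>B. R x y}) = (\<Sum>y\<in>B. card {x\<in>A. R x y})"
proof -
  have "\<And>x. card {y\<in>B. R x y} = (\<Sum>y\<in>B. if R x y then 1 else 0)"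
    using assms by (simp add: sum.If_cases Int_def)
  moreover have "\<And>y. card {x\<in>A. R x y} = (\<Sum>x\<in>A. if R x y then 1 else 0)"
    using assms by (simp add: sum.If_cases Int_def)
  ultimately show ?thesis by (simp add: sum.swap[of _ A B])
qed

lemma card_sq:
  assumes "finite B"
  shows "real (card {y\<in>B. R y})^2 = (\<Sum>y\<in>B. \<Sum>y'\<in>B. if R y \<and> R y' then 1 else 0)"
proof -
  have "real (card {y\<in>B. R y}) = (\<Sum>y\<in>B. if R y then 1 else 0)"
    using assms by (simp add: sum.If_cases Int_def)
  then show ?thesis
    apply (simp add: power2_eq_square sum_product)
    by (rule sum.cong[OF refl], rule sum.cong[OF refl]) auto
qed

lemma tt:
  fixes I :: "'a \<Rightarrow> 'b \<Rightarrow> bool"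
  assumes fA: "finite A" and fB: "finite B" and SB: "S \<subseteq> B" and Ane: "A \<noteq> {}"
  and diag: "\<And>a. a\<in>A \<Longrightarrow> real (card {b\<in>B. I a b}) = k"
  and off: "\<And>a a'. a\<in>A \<Longrightarrow> a'\<in>A \<Longrightarrow> a\<noteq>a' \<Longrightarrow> real (card {b\<in>B. I a b \<and> I a' b}) = l"
  and lk: "l \<le> k"
  shows "(\<Sum>a\<in>A. real (card {b\<in>S. I a b})^2)
     \<le> (\<Sum>a\<in>A. real (card {b\<in>S. I a b}))^2 / real (card A) + (k - l) * real (card S)"
proof -
  have fS: "finite S" using fB SB finite_subset by blast
  define y where "y a = real (card {b\<in>S. I a b})" for a
  define N where "N = real (card A)"
  have Npos: "N > 0" using fA Ane by (simp add: N_def card_gt_0_iff)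
  define Y where "Y = (\<Sum>a\<in>A. y a)"
  define z where "z a = y a - Y/N" for a
  have sz: "(\<Sum>a\<in>A. z a) = 0"
    using Npos by (simp add: z_def sum_subtractf Y_def N_def)
  have e1: "(\<Sum>a\<in>A. (y a)^2) = (\<Sum>a\<in>A. (z a)^2) + Y^2/N"
  proof -
    have "(\<Sum>a\<in>A. (y a)^2) = (\<Sum>a\<in>A. (z a)^2 + 2 * (Y/N) * z a + (Y/N)^2)"
      using Npos by (intro sum.cong) (auto simp: z_def power2_eq_square field_simps)
    also have "\<dots> = (\<Sum>a\<in>A. (z a)^2) + 2 * (Y/N) * (\<Sum>a\<in>A. z a) + N * (Y/N)^2"
      by (simp add: sum.distrib sum_distrib_left N_def)
    also have "\<dots> = (\<Sum>a\<in>A. (z a)^2) + Y^2/N"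
      using sz Npos by (simp add: power2_eq_square)
    finally show ?thesis .
  qed
  define w where "w b = (\<Sum>a\<in>A. if I a b then z a else 0)" for b
  have e2: "(\<Sum>a\<in>A. z a * y a) = (\<Sum>b\<in>S. w b)"
  proof -
    have "\<And>a. y a = (\<Sum>b\<in>S. if I a b then 1 else 0)"
      using fS by (simp add: y_def sum.If_cases Int_def)
    then have "(\<Sum>a\<in>A. z a * y a) = (\<Sum>a\<in>A. \<Sum>b\<in>S. if I a b then z a else 0)"
      by (simp add: sum_distrib_left if_distrib cong: if_cong)
    also have "\<dots> = (\<Sum>b\<in>S. w b)"
      unfolding w_def by (rule sum.swap)
    finally show ?thesis .
  qed
  have e3: "(\<Sum>a\<in>A. z a * y a) = (\<Sum>a\<in>A. (z a)^2)"
  proof -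
    have "(\<Sum>a\<in>A. z a * y a) = (\<Sum>a\<in>A. (z a)^2 + (Y/N) * z a)"
      by (rule sum.cong) (auto simp: z_def power2_eq_square algebra_simps)
    also have "\<dots> = (\<Sum>a\<in>A. (z a)^2)"
      using sz by (simp add: sum.distrib sum_distrib_left[symmetric] sum_divide_distrib[symmetric])
    finally show ?thesis .
  qed
  have cs: "(\<Sum>b\<in>S. w b)^2 \<le> (\<Sum>b\<in>S. (w b)^2) * real (card S)"
    by (rule sum_squared_le_sum_of_squares)
  have sub: "(\<Sum>b\<in>S. (w b)^2) \<le> (\<Sum>b\<in>B. (w b)^2)"
    by (rule sum_mono2[OF fB SB]) auto
  have e4: "(\<Sum>b\<in>B. (w b)^2) = (k - l) * (\<Sum>a\<in>A. (z a)^2)"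
  proof -
    have "(\<Sum>b\<in>B. (w b)^2) = (\<Sum>b\<in>B. \<Sum>a\<in>A. \<Sum>a'\<in>A. if I a b \<and> I a' b then z a * z a' else 0)"
      unfolding w_def power2_eq_square sum_product
      by (rule sum.cong[OF refl], rule sum.cong[OF refl], rule sum.cong[OF refl]) auto
    also have "\<dots> = (\<Sum>a\<in>A. \<Sum>a'\<in>A. \<Sum>b\<in>B. if I a b \<and> I a' b then z a * z a' else 0)"
      by (simp add: sum.swap[of _ B] sum.swap[of _ B A])
    also have "\<dots> = (\<Sum>a\<in>A. \<Sum>a'\<in>A. z a * z a' * real (card {b\<in>B. I a b \<and> I a' b}))"
      using fB by (intro sum.cong refl) (simp add: sum.If_cases Int_def)
    also have "\<dots> = (\<Sum>a\<in>A. \<Sum>a'\<in>A. z a * z a' * l + (if a = a' then (k - l) * (z a)^2 else 0))"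
      apply (intro sum.cong refl)
      subgoal for a a' using diag[of a] off[of a a'] by (cases "a = a'") (auto simp: power2_eq_square algebra_simps)
      done
    also have "\<dots> = (\<Sum>a\<in>A. \<Sum>a'\<in>A. z a * z a' * l) + (\<Sum>a\<in>A. (k - l) * (z a)^2)"
      using fA by (simp add: sum.distrib sum.delta)
    also have "\<dots> = l * (\<Sum>a\<in>A. z a) * (\<Sum>a\<in>A. z a) + (k - l) * (\<Sum>a\<in>A. (z a)^2)"
      by (simp add: sum_distrib_left sum_distrib_right mult_ac)
    also have "\<dots> = (k - l) * (\<Sum>a\<in>A. (z a)^2)" using sz by simp
    finally show ?thesis .
  qed
  define T where "T = (\<Sum>a\<in>A. (z a)^2)"
  have T0: "T \<ge> 0" unfolding T_def by (rule sum_nonneg) auto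
  have "T^2 \<le> (k - l) * T * real (card S)"
    using cs sub e4 e2 e3 unfolding T_def
    by (metis (no_types, lifting) dual_order.trans mult_right_mono of_nat_0_le_iff)
  then have Tb: "T \<le> (k - l) * real (card S)"
  proof (cases "T > 0")
    case True
    with \<open>T^2 \<le> _\<close> show ?thesis by (simp add: power2_eq_square mult.assoc)
  next
    case False
    then have "T = 0" using T0 by simp
    then show ?thesis using lk by simp
  qed
  show ?thesis
    using e1 Tb unfolding T_def y_def[symmetric] Y_def N_def by simp
qed

lemma final_alg:
  fixes q m M R n \<sigma> e Qt X Y :: real
  assumes q2: "2 \<le> q" and mq: "q + 1 \<le> m" and Mp: "0 < M" and Rm: "m \<le> R"
    and s1: "1 \<le> \<sigma>" and sn: "\<sigma> \<le> n" and e0: "0 \<le> e"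
    and rel1: "M * m = R * (q + 1)" and rel2: "n * q^2 = Qt * R"
    and hX: "X = q*(q+1)*\<sigma> + e"
    and hY: "Y \<le> (q^2*\<sigma>)^2/Qt + (R - m)*\<sigma>"
    and hXY: "q * X \<le> (q+1)^2/M * Y + (m-1)*q^2*\<sigma>"
  shows "e \<le> q*(q+1)*(m-1)*\<sigma> * \<sigma>/n + 3*(q*(q+1)*(m-1)*\<sigma>)/q"
proof -
  have n0: "0 < n" using s1 sn by simp
  have R0: "0 < R" using mq Rm q2 by simp
  have Qt_eq: "Qt = n*q^2/R" using rel2 R0 by (simp add: field_simps)
  have RM: "R = M*m/(q+1)" using rel1 q2 by (simp add: field_simps)
  have A: "(q+1)^2/M * Y \<le> (q+1)^2/M * ((q^2*\<sigma>)^2/Qt + (R-m)*\<sigma>)"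
    by (rule mult_left_mono) (use hY Mp in auto)
  have K: "(q+1)^2/M*R = (q+1)*m"
  proof -
    have "(q+1)^2/M*R = (q+1)*((q+1)*R)/M" by (simp add: power2_eq_square)
    also have "\<dots> = (q+1)*(M*m)/M" using rel1 by (simp add: mult.commute)
    also have "\<dots> = (q+1)*m" using Mp by simp
    finally show ?thesis .
  qed
  have B1: "(q^2*\<sigma>)^2/Qt = q^2*\<sigma>^2*R/n"
    unfolding Qt_eq using R0 n0 q2 by (simp add: field_simps power2_eq_square)
  have B: "(q+1)^2/M * ((q^2*\<sigma>)^2/Qt) = (q+1)*q^2*m*\<sigma>^2/n"
  proof -
    have "(q+1)^2/M * ((q^2*\<sigma>)^2/Qt) = ((q+1)^2/M*R) * (q^2*\<sigma>^2/n)"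
      unfolding B1 by simp
    then show ?thesis unfolding K by simp
  qed
  have C: "(q+1)^2/M * ((R-m)*\<sigma>) \<le> (q+1)*m*\<sigma>"
  proof -
    have "(q+1)^2/M * ((R-m)*\<sigma>) = ((q+1)^2/M*R)*\<sigma> - (q+1)^2*m*\<sigma>/M"
      using Mp by (simp add: field_simps)
    then have "(q+1)^2/M * ((R-m)*\<sigma>) = (q+1)*m*\<sigma> - (q+1)^2*m*\<sigma>/M"
      unfolding K .
    moreover have "0 \<le> (q+1)^2*m*\<sigma>/M" using Mp q2 mq s1 by simp
    ultimately show ?thesis by simp
  qed
  have D: "(q+1)*q^2*m*\<sigma>^2/n \<le> q^2*(q+1)*(m-1)*\<sigma>^2/n + q^2*(q+1)*\<sigma>"
  proof -
    have "(q+1)*q^2*m*\<sigma>^2/n = q^2*(q+1)*(m-1)*\<sigma>^2/n + q^2*(q+1)*\<sigma> * (\<sigma>/n)"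
      using n0 by (simp add: field_simps power2_eq_square)
    moreover have "q^2*(q+1)*\<sigma> * (\<sigma>/n) \<le> q^2*(q+1)*\<sigma> * 1"
      by (rule mult_left_mono) (use sn n0 q2 s1 in auto)
    ultimately show ?thesis by simp
  qed
  have E: "(q+1)*m*\<sigma> + (m-1)*q^2*\<sigma> \<le> 3*q*(q+1)*(m-1)*\<sigma>"
  proof -
    have "(q+1)*m \<le> (q+1)*(2*(m-1))" using mq q2 by simp
    also have "\<dots> \<le> (q+1)*(q*(m-1))"
    proof (rule mult_left_mono)
      show "2*(m-1) \<le> q*(m-1)" by (rule mult_right_mono) (use mq q2 in auto)
    qed (use q2 in auto)
    finally have e1: "(q+1)*m \<le> q*(q+1)*(m-1)" by (simp add: algebra_simps)
    have e2: "(m-1)*q^2 \<le> q*(q+1)*(m-1)" using mq q2 by (simp add: power2_eq_square algebra_simps)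
    have "(q+1)*m + (m-1)*q^2 \<le> 3*q*(q+1)*(m-1)"
    proof -
      have "0 \<le> q*(q+1)*(m-1)" using mq q2 by simp
      then show ?thesis using e1 e2 by linarith
    qed
    from mult_right_mono[OF this, of \<sigma>] s1 show ?thesis by (simp add: algebra_simps)
  qed
  have "q * e \<le> q*(q*(q+1)*(m-1)*\<sigma>*\<sigma>/n + 3*(q*(q+1)*(m-1)*\<sigma>)/q)"
  proof -
    have "q*(q*(q+1)*\<sigma> + e) \<le> (q+1)*q^2*m*\<sigma>^2/n + (q+1)*m*\<sigma> + (m-1)*q^2*\<sigma>"
      using hXY A B C hX by (simp add: distrib_left)
    then have "q*e \<le> (q+1)*q^2*m*\<sigma>^2/n + (q+1)*m*\<sigma> + (m-1)*q^2*\<sigma> - q^2*(q+1)*\<sigma>"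
      by (simp add: algebra_simps power2_eq_square)
    also have "\<dots> \<le> q^2*(q+1)*(m-1)*\<sigma>^2/n + 3*q*(q+1)*(m-1)*\<sigma>"
      using D E by simp
    also have "\<dots> = q*(q*(q+1)*(m-1)*\<sigma>*\<sigma>/n + 3*(q*(q+1)*(m-1)*\<sigma>)/q)"
      using q2 by (simp add: field_simps power2_eq_square)
    finally show ?thesis .
  qed
  then show ?thesis using q2 by simp
qed


locale geom =
  fixes Ls :: "'p::finite set set" and Ps :: "'p set set" and q t :: nat
  assumes card_univ: "card (UNIV :: 'p set) = q^t"
  and q2: "2 \<le> q" and t3: "3 \<le> t"
  and card_L: "L \<in> Ls \<Longrightarrow> card L = q"
  and card_P: "P \<in> Ps \<Longrightarrow> card P = q^2"
  and line_ex: "x \<noteq> y \<Longrightarrow> \<exists>L\<in>Ls. x \<in> L \<and> y \<in> L"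
  and line_uniq: "\<lbrakk>L\<in>Ls; L'\<in>Ls; x\<in>L; y\<in>L; x\<in>L'; y\<in>L'; x\<noteq>y\<rbrakk> \<Longrightarrow> L = L'"
  and plane_ex: "\<lbrakk>L\<in>Ls; y\<notin>L\<rbrakk> \<Longrightarrow> \<exists>P\<in>Ps. L\<subseteq>P \<and> y\<in>P"
  and plane_uniq: "\<lbrakk>L\<in>Ls; y\<notin>L; P\<in>Ps; Q\<in>Ps; L\<subseteq>P; y\<in>P; L\<subseteq>Q; y\<in>Q\<rbrakk> \<Longrightarrow> P = Q"
  and plane_line: "\<lbrakk>P\<in>Ps; L\<in>Ls; x\<in>L; y\<in>L; x\<noteq>y; x\<in>P; y\<in>P\<rbrakk> \<Longrightarrow> L\<subseteq>P"
begin

lemma finS[simp]: "finite (X :: 'p set set)" by simp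

lemma UN_eq_card:
  assumes "U = (\<Union>i\<in>I. A i)" "finite I"
    "\<And>i j z. i\<in>I \<Longrightarrow> j\<in>I \<Longrightarrow> z \<in> A i \<Longrightarrow> z \<in> A j \<Longrightarrow> i = j"
    "\<And>i. i\<in>I \<Longrightarrow> finite (A i)" "\<And>i. i \<in> I \<Longrightarrow> card (A i) = k"
  shows "card U = card I * k"
proof -
  have "card U = (\<Sum>i\<in>I. card (A i))"
    unfolding assms(1) by (rule card_UN_disjoint) (use assms in blast)+
  also have "\<dots> = (\<Sum>i\<in>I. k)" using assms(5) by simp
  finally show ?thesis by simp
qed

lemma lines_thru: "card {L\<in>Ls. x\<in>L} * (q - 1) = q^t - 1"
proof -
  have "UNIV - {x} = (\<Union>L\<in>{L\<in>Ls. x\<in>L}. L - {x})"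
  proof (intro equalityI subsetI)
    fix y assume "y \<in> UNIV - {x}"
    then obtain L where "L\<in>Ls" "x\<in>L" "y\<in>L" using line_ex[of x y] by auto
    then show "y \<in> (\<Union>L\<in>{L\<in>Ls. x\<in>L}. L - {x})" using \<open>y \<in> UNIV - {x}\<close> by auto
  qed auto
  then have "card (UNIV - {x}) = card {L\<in>Ls. x\<in>L} * (q - 1)"
  proof (rule UN_eq_card)
    fix L L' z assume "L \<in> {L\<in>Ls. x\<in>L}" "L' \<in> {L\<in>Ls. x\<in>L}" "z \<in> L - {x}" "z \<in> L' - {x}"
    then show "L = L'" using line_uniq[of L L' x z] by auto
  qed (auto simp: card_L)
  then show ?thesis using card_univ by simp
qed

lemma planes_thru_line: assumes "L \<in> Ls" shows "card {P\<in>Ps. L\<subseteq>P} * (q^2 - q) = q^t - q"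
proof -
  have "UNIV - L = (\<Union>P\<in>{P\<in>Ps. L\<subseteq>P}. P - L)"
  proof (intro equalityI subsetI)
    fix y assume "y \<in> UNIV - L"
    then obtain P where "P\<in>Ps" "L\<subseteq>P" "y\<in>P" using plane_ex[OF assms, of y] by auto
    then show "y \<in> (\<Union>P\<in>{P\<in>Ps. L\<subseteq>P}. P - L)" using \<open>y \<in> UNIV - L\<close> by auto
  qed auto
  then have "card (UNIV - L) = card {P\<in>Ps. L\<subseteq>P} * (q^2 - q)"
  proof (rule UN_eq_card)
    fix P Q z assume "P \<in> {P\<in>Ps. L\<subseteq>P}" "Q \<in> {P\<in>Ps. L\<subseteq>P}" "z \<in> P - L" "z \<in> Q - L"
    then show "P = Q" using plane_uniq[OF assms, of z P Q] by auto
  next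
    fix P assume "P \<in> {P\<in>Ps. L\<subseteq>P}"
    then show "card (P - L) = q^2 - q" using card_L[OF assms] card_P by (simp add: card_Diff_subset)
  qed auto
  then show ?thesis using card_univ assms card_L by (simp add: card_Diff_subset)
qed

lemma lines_in_plane_thru: assumes P: "P \<in> Ps" and x: "x \<in> P"
  shows "card {L\<in>Ls. x\<in>L \<and> L\<subseteq>P} * (q - 1) = q^2 - 1"
proof -
  have "P - {x} = (\<Union>L\<in>{L\<in>Ls. x\<in>L \<and> L\<subseteq>P}. L - {x})"
  proof (intro equalityI subsetI)
    fix y assume y: "y \<in> P - {x}"
    then obtain L where L: "L\<in>Ls" "x\<in>L" "y\<in>L" using line_ex[of x y] by auto
    then have "L \<subseteq> P" using plane_line[OF P L(1) L(2) L(3)] y x by auto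
    then show "y \<in> (\<Union>L\<in>{L\<in>Ls. x\<in>L \<and> L\<subseteq>P}. L - {x})" using L y by auto
  qed auto
  then have "card (P - {x}) = card {L\<in>Ls. x\<in>L \<and> L\<subseteq>P} * (q - 1)"
  proof (rule UN_eq_card)
    fix L L' z assume "L \<in> {L\<in>Ls. x\<in>L \<and> L\<subseteq>P}" "L' \<in> {L\<in>Ls. x\<in>L \<and> L\<subseteq>P}" "z \<in> L - {x}" "z \<in> L' - {x}"
    then show "L = L'" using line_uniq[of L L' x z] by auto
  qed (auto simp: card_L)
  then show ?thesis using card_P P x by simp
qed

definition "mN = (q^t - q) div (q^2 - q)"
definition "MN = (q^t - 1) div (q - 1)"

lemma q_pos: "0 < q" and q1: "1 < q" using q2 by auto

lemma qt_ge: "q^3 \<le> q^t" using t3 q2 by (simp add: power_increasing)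

lemma m_eq: assumes "L \<in> Ls" shows "card {P\<in>Ps. L\<subseteq>P} = mN"
proof -
  have "0 < q^2 - q" using q2 by (simp add: power2_eq_square)
  then show ?thesis using planes_thru_line[OF assms] unfolding mN_def
    by (metis nonzero_mult_div_cancel_right neq0_conv)
qed

lemma M_eq: "card {L\<in>Ls. x\<in>L} = MN"
proof -
  have "0 < q - 1" using q2 by simp
  then show ?thesis using lines_thru[of x] unfolding MN_def
    by (metis nonzero_mult_div_cancel_right neq0_conv)
qed

lemma mN_ge: "q + 1 \<le> mN"
proof -
  have "(q + 1) * (q^2 - q) = q^3 - q" using q2
    by (simp add: power2_eq_square power3_eq_cube algebra_simps)
  also have "\<dots> \<le> q^t - q" using qt_ge by simp
  finally have "(q + 1) * (q^2 - q) \<le> q^t - q" .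
  moreover have "0 < q^2 - q" using q2 by (simp add: power2_eq_square)
  ultimately show ?thesis unfolding mN_def
    by (metis div_le_mono nonzero_mult_div_cancel_right neq0_conv)
qed

lemma c_x: assumes "P \<in> Ps" "x \<in> P" shows "card {L\<in>Ls. x\<in>L \<and> L\<subseteq>P} = q + 1"
proof -
  have "q^2 - 1 = (q + 1) * (q - 1)" using q2 by (simp add: power2_eq_square algebra_simps)
  moreover have "0 < q - 1" using q2 by simp
  ultimately show ?thesis using lines_in_plane_thru[OF assms]
    by (metis mult_right_cancel neq0_conv)
qed

lemma c_eq: assumes P: "P \<in> Ps" shows "card {L\<in>Ls. L\<subseteq>P} = q * (q + 1)"
proof -
  have "(\<Sum>x\<in>P. card {L\<in>{L\<in>Ls. L\<subseteq>P}. x\<in>L}) = (\<Sum>L\<in>{L\<in>Ls. L\<subseteq>P}. card {x\<in>P. x\<in>L})"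
    by (rule dc) auto
  moreover have "(\<Sum>x\<in>P. card {L\<in>{L\<in>Ls. L\<subseteq>P}. x\<in>L}) = (\<Sum>x\<in>P. q + 1)"
  proof (intro sum.cong refl)
    fix x assume "x \<in> P"
    have "{L\<in>{L\<in>Ls. L\<subseteq>P}. x\<in>L} = {L\<in>Ls. x\<in>L \<and> L\<subseteq>P}" by auto
    then show "card {L\<in>{L\<in>Ls. L\<subseteq>P}. x\<in>L} = q + 1" using c_x[OF P \<open>x \<in> P\<close>] by simp
  qed
  moreover have "(\<Sum>L\<in>{L\<in>Ls. L\<subseteq>P}. card {x\<in>P. x\<in>L}) = (\<Sum>L\<in>{L\<in>Ls. L\<subseteq>P}. q)"
  proof (intro sum.cong refl)
    fix L assume "L \<in> {L\<in>Ls. L\<subseteq>P}"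
    then have "{x\<in>P. x\<in>L} = L" "L \<in> Ls" by auto
    then show "card {x\<in>P. x\<in>L} = q" using card_L by simp
  qed
  ultimately have "q^2 * (q + 1) = card {L\<in>Ls. L\<subseteq>P} * q"
    using card_P[OF P] by simp
  then have "(q * (q + 1)) * q = card {L\<in>Ls. L\<subseteq>P} * q"
    by (simp add: power2_eq_square algebra_simps)
  then show ?thesis using q_pos by (metis mult_right_cancel neq0_conv)
qed

definition "RN = MN * mN div (q + 1)"

lemma R_eq: "card {P\<in>Ps. x\<in>P} = RN"
proof -
  have "(\<Sum>P\<in>{P\<in>Ps. x\<in>P}. card {L\<in>{L\<in>Ls. x\<in>L}. L\<subseteq>P}) = (\<Sum>L\<in>{L\<in>Ls. x\<in>L}. card {P\<in>{P\<in>Ps. x\<in>P}. L\<subseteq>P})"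
    by (rule dc) auto
  moreover have "(\<Sum>P\<in>{P\<in>Ps. x\<in>P}. card {L\<in>{L\<in>Ls. x\<in>L}. L\<subseteq>P}) = (\<Sum>P\<in>{P\<in>Ps. x\<in>P}. q + 1)"
  proof (intro sum.cong refl)
    fix P assume "P \<in> {P\<in>Ps. x\<in>P}"
    then show "card {L\<in>{L\<in>Ls. x\<in>L}. L\<subseteq>P} = q + 1" using c_x[of P x]
      by (simp add: conj_assoc)
  qed
  moreover have "(\<Sum>L\<in>{L\<in>Ls. x\<in>L}. card {P\<in>{P\<in>Ps. x\<in>P}. L\<subseteq>P}) = (\<Sum>L\<in>{L\<in>Ls. x\<in>L}. mN)"
  proof (intro sum.cong refl)
    fix L assume L: "L \<in> {L\<in>Ls. x\<in>L}"
    then have "{P\<in>{P\<in>Ps. x\<in>P}. L\<subseteq>P} = {P\<in>Ps. L\<subseteq>P}" by auto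
    then show "card {P\<in>{P\<in>Ps. x\<in>P}. L\<subseteq>P} = mN" using m_eq L by simp
  qed
  ultimately have "card {P\<in>Ps. x\<in>P} * (q + 1) = MN * mN" using M_eq[of x] by simp
  then show ?thesis unfolding RN_def by (metis div_mult_self_is_m zero_less_Suc Suc_eq_plus1)
qed

lemma n_eq: "card Ps * q^2 = q^t * RN"
proof -
  have "(\<Sum>P\<in>Ps. card {x\<in>UNIV. x\<in>P}) = (\<Sum>x\<in>UNIV. card {P\<in>Ps. x\<in>P})"
    by (rule dc) auto
  then show ?thesis using card_P card_univ by (simp add: R_eq)
qed

lemma pair: assumes "x \<noteq> y" shows "card {P\<in>Ps. x\<in>P \<and> y\<in>P} = mN"
proof -
  obtain L where L: "L\<in>Ls" "x\<in>L" "y\<in>L" using line_ex[OF assms] by auto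
  have "{P\<in>Ps. x\<in>P \<and> y\<in>P} = {P\<in>Ps. L\<subseteq>P}"
  proof (intro equalityI subsetI)
    fix P assume "P \<in> {P\<in>Ps. x\<in>P \<and> y\<in>P}"
    then show "P \<in> {P\<in>Ps. L\<subseteq>P}" using plane_line[OF _ L(1) L(2) L(3) assms, of P] by auto
  qed (use L in auto)
  then show ?thesis using m_eq[OF L(1)] by simp
qed

lemma two_lines: assumes L: "L\<in>Ls" "L'\<in>Ls" "L\<noteq>L'" "x\<in>L" "x\<in>L'"
  shows "card {P\<in>Ps. L\<subseteq>P \<and> L'\<subseteq>P} = 1"
proof -
  have "card (L' - {x}) = q - 1" using card_L[OF L(2)] L by simp
  then have "card (L' - {x}) \<noteq> 0" using q2 by simp
  then have "L' - {x} \<noteq> {}" by (metis card.empty)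
  then obtain y where y: "y \<in> L'" "y \<noteq> x" by auto
  have yL: "y \<notin> L" using line_uniq[OF L(1) L(2) L(4) _ L(5) y(1)] y L(3) by auto
  obtain P where P: "P\<in>Ps" "L\<subseteq>P" "y\<in>P" using plane_ex[OF L(1) yL] by auto
  have "x \<in> P" using P L by auto
  have "L' \<subseteq> P" using plane_line[OF P(1) L(2) L(5) y(1)] y P \<open>x \<in> P\<close> by auto
  have "{P\<in>Ps. L\<subseteq>P \<and> L'\<subseteq>P} = {P}"
  proof (intro equalityI subsetI)
    fix Q assume "Q \<in> {P\<in>Ps. L\<subseteq>P \<and> L'\<subseteq>P}"
    then show "Q \<in> {P}" using plane_uniq[OF L(1) yL, of Q P] P y by auto
  qed (use P \<open>L' \<subseteq> P\<close> in auto)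
  then show ?thesis by simp
qed

lemma inter_eq: assumes "P\<in>Ps" "Q\<in>Ps" "P\<noteq>Q" "L\<in>Ls" "L\<subseteq>P" "L\<subseteq>Q"
  shows "P \<inter> Q = L"
proof (intro equalityI subsetI)
  fix y assume "y \<in> P \<inter> Q"
  then show "y \<in> L" using plane_uniq[OF assms(4), of y P Q] assms by auto
qed (use assms in auto)

lemma plane_not_line: assumes "P \<in> Ps" shows "P \<notin> Ls"
proof
  assume "P \<in> Ls"
  then have "q^2 = q" using card_L[of P] card_P[OF assms] by simp
  then show False using q2 by (simp add: power2_eq_square)
qed

lemma common_lines: assumes P: "P\<in>Ps" and Q: "Q\<in>Ps"
  shows "card {L\<in>Ls. L\<subseteq>P \<and> L\<subseteq>Q} = (if P = Q then q*(q+1) else if P\<inter>Q\<in>Ls then 1 else 0)"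
proof (cases "P = Q")
  case True then show ?thesis using c_eq[OF P] by simp
next
  case False
  show ?thesis
  proof (cases "P\<inter>Q\<in>Ls")
    case True
    have "{L\<in>Ls. L\<subseteq>P \<and> L\<subseteq>Q} = {P\<inter>Q}"
    proof (intro equalityI subsetI)
      fix L assume "L \<in> {L\<in>Ls. L\<subseteq>P \<and> L\<subseteq>Q}"
      then show "L \<in> {P\<inter>Q}" using inter_eq[OF P Q False, of L] by simp
    qed (use True in simp)
    then show ?thesis using True False by simp
  next
    case nl: False
    have "{L\<in>Ls. L\<subseteq>P \<and> L\<subseteq>Q} = {}"
    proof (intro equalityI subsetI)
      fix L assume "L \<in> {L\<in>Ls. L\<subseteq>P \<and> L\<subseteq>Q}"
      then show "L \<in> {}" using inter_eq[OF P Q False, of L] nl by simp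
    qed simp
    then show ?thesis using nl False by simp
  qed
qed

lemma deg: assumes P: "P\<in>Ps" shows "card {Q\<in>Ps. P\<inter>Q\<in>Ls} = q*(q+1)*(mN - 1)"
proof -
  have "{Q\<in>Ps. P\<inter>Q\<in>Ls} = (\<Union>L\<in>{L\<in>Ls. L\<subseteq>P}. {Q\<in>Ps. L\<subseteq>Q} - {P})"
  proof (intro equalityI subsetI)
    fix Q assume "Q \<in> {Q\<in>Ps. P\<inter>Q\<in>Ls}"
    then have Q: "Q\<in>Ps" "P\<inter>Q\<in>Ls" by auto
    then have "Q \<noteq> P" using plane_not_line[OF P] by auto
    then show "Q \<in> (\<Union>L\<in>{L\<in>Ls. L\<subseteq>P}. {Q\<in>Ps. L\<subseteq>Q} - {P})" using Q by blast
  next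
    fix Q assume "Q \<in> (\<Union>L\<in>{L\<in>Ls. L\<subseteq>P}. {Q\<in>Ps. L\<subseteq>Q} - {P})"
    then obtain L where "L\<in>Ls" "L\<subseteq>P" "Q\<in>Ps" "L\<subseteq>Q" "Q\<noteq>P" by auto
    then show "Q \<in> {Q\<in>Ps. P\<inter>Q\<in>Ls}" using inter_eq[OF P, of Q L] by auto
  qed
  then have "card {Q\<in>Ps. P\<inter>Q\<in>Ls} = card {L\<in>Ls. L\<subseteq>P} * (mN - 1)"
  proof (rule UN_eq_card)
    fix L L' Q assume "L \<in> {L\<in>Ls. L\<subseteq>P}" "L' \<in> {L\<in>Ls. L\<subseteq>P}" "Q \<in> {Q\<in>Ps. L\<subseteq>Q} - {P}" "Q \<in> {Q\<in>Ps. L'\<subseteq>Q} - {P}"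
    then show "L = L'" using inter_eq[OF P, of Q L] inter_eq[OF P, of Q L'] by auto
  next
    fix L assume "L \<in> {L\<in>Ls. L\<subseteq>P}"
    then show "card ({Q\<in>Ps. L\<subseteq>Q} - {P}) = mN - 1" using m_eq P by (simp add: card_Diff_singleton)
  qed auto
  then show ?thesis using c_eq[OF P] by simp
qed

lemma R_ge: "mN \<le> RN"
proof -
  have "q^1 \<le> q^t" by (rule power_increasing) (use t3 q2 in auto)
  then have c2: "2 \<le> card (UNIV :: 'p set)" using card_univ q2 by simp
  obtain y :: 'p where "y \<noteq> x"
  proof (rule ccontr)
    assume "\<not> thesis"
    with that have "UNIV = {x}" by blast
    then have "card (UNIV :: 'p set) = card {x}" by (rule arg_cong[where f=card])
    then have "card (UNIV :: 'p set) = 1" by simp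
    then show False using c2 by simp
  qed
  then obtain L where L: "L\<in>Ls" "x\<in>L" "y\<in>L" using line_ex by blast
  have "{P\<in>Ps. L\<subseteq>P} \<subseteq> {P\<in>Ps. x\<in>P}" using L by auto
  then have "card {P\<in>Ps. L\<subseteq>P} \<le> card {P\<in>Ps. x\<in>P}" by (intro card_mono) auto
  then show ?thesis using m_eq[OF L(1)] R_eq by simp
qed

lemma RN_rel: "RN * (q + 1) = MN * mN"
proof -
  obtain x :: 'p where True by simp
  have "(\<Sum>P\<in>{P\<in>Ps. x\<in>P}. card {L\<in>{L\<in>Ls. x\<in>L}. L\<subseteq>P}) = (\<Sum>L\<in>{L\<in>Ls. x\<in>L}. card {P\<in>{P\<in>Ps. x\<in>P}. L\<subseteq>P})"
    by (rule dc) auto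
  moreover have "(\<Sum>P\<in>{P\<in>Ps. x\<in>P}. card {L\<in>{L\<in>Ls. x\<in>L}. L\<subseteq>P}) = (\<Sum>P\<in>{P\<in>Ps. x\<in>P}. q + 1)"
  proof (intro sum.cong refl)
    fix P assume "P \<in> {P\<in>Ps. x\<in>P}"
    then show "card {L\<in>{L\<in>Ls. x\<in>L}. L\<subseteq>P} = q + 1" using c_x[of P x]
      by (simp add: conj_assoc)
  qed
  moreover have "(\<Sum>L\<in>{L\<in>Ls. x\<in>L}. card {P\<in>{P\<in>Ps. x\<in>P}. L\<subseteq>P}) = (\<Sum>L\<in>{L\<in>Ls. x\<in>L}. mN)"
  proof (intro sum.cong refl)
    fix L assume L: "L \<in> {L\<in>Ls. x\<in>L}"
    then have "{P\<in>{P\<in>Ps. x\<in>P}. L\<subseteq>P} = {P\<in>Ps. L\<subseteq>P}" by auto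
    then show "card {P\<in>{P\<in>Ps. x\<in>P}. L\<subseteq>P} = mN" using m_eq L by simp
  qed
  ultimately have "card {P\<in>Ps. x\<in>P} * (q + 1) = MN * mN" using M_eq[of x] by simp
  then show ?thesis using R_eq[of x] by simp
qed

lemma MN_pos: "0 < MN"
proof -
  have "q^1 < q^t" by (rule power_strict_increasing) (use t3 q2 in auto)
  then have "0 < q^t - 1" using q2 by simp
  then show ?thesis using lines_thru[of undefined] M_eq by (metis gr0I mult_is_0)
qed

lemma sum_lines_points:
  "(\<Sum>x\<in>UNIV. \<Sum>L\<in>{L\<in>Ls. x\<in>L}. f L) = real q * (\<Sum>L\<in>Ls. f L)"
proof -
  have "(\<Sum>x\<in>UNIV. \<Sum>L\<in>{L\<in>Ls. x\<in>L}. f L) = (\<Sum>x\<in>UNIV. \<Sum>L\<in>Ls. if x\<in>L then f L else 0)"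
    by (simp add: sum.inter_filter)
  also have "\<dots> = (\<Sum>L\<in>Ls. \<Sum>x\<in>UNIV. if x\<in>L then f L else 0)"
    by (rule sum.swap)
  also have "\<dots> = (\<Sum>L\<in>Ls. real q * f L)"
  proof (intro sum.cong refl)
    fix L assume "L \<in> Ls"
    have "(\<Sum>x\<in>UNIV. if x\<in>L then f L else 0) = (\<Sum>x\<in>L. f L)"
      by (simp add: sum.If_cases Int_def)
    also have "\<dots> = real q * f L" using card_L[OF \<open>L\<in>Ls\<close>] by simp
    finally show "(\<Sum>x\<in>UNIV. if x\<in>L then f L else 0) = real q * f L" .
  qed
  finally show ?thesis by (simp add: sum_distrib_left)
qed

lemma card_pairs_S: "card {(P,Q). P\<in>S \<and> Q\<in>S \<and> P\<inter>Q\<in>Ls} = (\<Sum>P\<in>S. card {Q\<in>S. P\<inter>Q\<in>Ls})"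
proof -
  have "{(P,Q). P\<in>S \<and> Q\<in>S \<and> P\<inter>Q\<in>Ls} = Sigma S (\<lambda>P. {Q\<in>S. P\<inter>Q\<in>Ls})" by auto
  then show ?thesis by (simp add: card_SigmaI)
qed

lemma card_pairs_Ps: assumes "S \<subseteq> Ps"
  shows "card {(P,Q). P\<in>S \<and> Q\<in>Ps \<and> P\<inter>Q\<in>Ls} = card S * (q*(q+1)*(mN - 1))"
proof -
  have "{(P,Q). P\<in>S \<and> Q\<in>Ps \<and> P\<inter>Q\<in>Ls} = Sigma S (\<lambda>P. {Q\<in>Ps. P\<inter>Q\<in>Ls})" by auto
  then have "card {(P,Q). P\<in>S \<and> Q\<in>Ps \<and> P\<inter>Q\<in>Ls} = (\<Sum>P\<in>S. card {Q\<in>Ps. P\<inter>Q\<in>Ls})"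
    by (simp add: card_SigmaI)
  also have "\<dots> = (\<Sum>P\<in>S. q*(q+1)*(mN - 1))" using assms deg by (intro sum.cong) auto
  finally show ?thesis by simp
qed

lemma sumsq_lines: assumes SP: "S \<subseteq> Ps"
  shows "(\<Sum>L\<in>Ls. real (card {P\<in>S. L\<subseteq>P})^2)
     = real (q*(q+1)) * real (card S) + real (card {(P,Q). P\<in>S \<and> Q\<in>S \<and> P\<inter>Q\<in>Ls})"
proof -
  have "(\<Sum>L\<in>Ls. real (card {P\<in>S. L\<subseteq>P})^2)
     = (\<Sum>L\<in>Ls. \<Sum>P\<in>S. \<Sum>Q\<in>S. if L\<subseteq>P \<and> L\<subseteq>Q then 1 else 0)"
    by (intro sum.cong refl card_sq) simp
  also have "\<dots> = (\<Sum>P\<in>S. \<Sum>L\<in>Ls. \<Sum>Q\<in>S. if L\<subseteq>P \<and> L\<subseteq>Q then 1 else 0)"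
    by (rule sum.swap)
  also have "\<dots> = (\<Sum>P\<in>S. \<Sum>Q\<in>S. \<Sum>L\<in>Ls. if L\<subseteq>P \<and> L\<subseteq>Q then 1 else 0)"
    by (rule sum.cong[OF refl]) (rule sum.swap)
  also have "\<dots> = (\<Sum>P\<in>S. \<Sum>Q\<in>S. real (card {L\<in>Ls. L\<subseteq>P \<and> L\<subseteq>Q}))"
    by (rule sum.cong[OF refl], rule sum.cong[OF refl]) (simp add: sum.If_cases Int_def)
  also have "\<dots> = (\<Sum>P\<in>S. \<Sum>Q\<in>S. (if P = Q then real (q*(q+1)) else 0) + (if P\<inter>Q\<in>Ls then 1 else 0))"
  proof (intro sum.cong refl)
    fix P Q assume "P \<in> S" "Q \<in> S"
    then have PQ: "P\<in>Ps" "Q\<in>Ps" using SP by auto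
    show "real (card {L\<in>Ls. L\<subseteq>P \<and> L\<subseteq>Q}) = (if P = Q then real (q*(q+1)) else 0) + (if P\<inter>Q\<in>Ls then 1 else 0)"
      using common_lines[OF PQ] plane_not_line[OF PQ(1)] by auto
  qed
  also have "\<dots> = (\<Sum>P\<in>S. real (q*(q+1)) + real (card {Q\<in>S. P\<inter>Q\<in>Ls}))"
    by (rule sum.cong[OF refl]) (simp add: sum.distrib sum.If_cases Int_def)
  also have "\<dots> = real (q*(q+1)) * real (card S) + real (card {(P,Q). P\<in>S \<and> Q\<in>S \<and> P\<inter>Q\<in>Ls})"
    by (simp add: sum.distrib card_pairs_S)
  finally show ?thesis .
qed

lemma local_bd: assumes SP: "S \<subseteq> Ps"
  shows "(\<Sum>L\<in>{L\<in>Ls. x\<in>L}. real (card {P\<in>S. L\<subseteq>P})^2)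
    \<le> (real (q+1) * real (card {P\<in>S. x\<in>P}))^2 / real MN + (real mN - 1) * real (card {P\<in>S. x\<in>P})"
proof -
  let ?A = "{L\<in>Ls. x\<in>L}" and ?B = "{P\<in>Ps. x\<in>P}" and ?S = "{P\<in>S. x\<in>P}"
  have "card ?A > 0" using MN_pos M_eq[of x] by simp
  then have Ane: "?A \<noteq> {}" by (simp add: card_gt_0_iff)
  have 1: "(\<Sum>a\<in>?A. real (card {b\<in>?S. a \<subseteq> b})^2)
     \<le> (\<Sum>a\<in>?A. real (card {b\<in>?S. a \<subseteq> b}))^2 / real (card ?A) + (real mN - 1) * real (card ?S)"
  proof (rule tt)
    show "?S \<subseteq> ?B" using SP by auto
    show "?A \<noteq> {}" by (rule Ane)
  next
    fix L assume L: "L \<in> ?A"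
    then have "{b\<in>?B. L \<subseteq> b} = {P\<in>Ps. L\<subseteq>P}" by auto
    then show "real (card {b\<in>?B. L \<subseteq> b}) = real mN" using m_eq L by simp
  next
    fix L L' assume L: "L \<in> ?A" "L' \<in> ?A" "L \<noteq> L'"
    then have "{b\<in>?B. L \<subseteq> b \<and> L' \<subseteq> b} = {P\<in>Ps. L\<subseteq>P \<and> L'\<subseteq>P}" by auto
    then show "real (card {b\<in>?B. L \<subseteq> b \<and> L' \<subseteq> b}) = 1" using two_lines[of L L' x] L by simp
  next
    show "1 \<le> real mN" using mN_ge by simp
  qed auto
  have 2: "\<And>L. L \<in> ?A \<Longrightarrow> {b\<in>?S. L \<subseteq> b} = {P\<in>S. L\<subseteq>P}" by auto
  have 3: "(\<Sum>a\<in>?A. card {b\<in>?S. a \<subseteq> b}) = (q + 1) * card ?S"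
  proof -
    have "(\<Sum>a\<in>?A. card {b\<in>?S. a \<subseteq> b}) = (\<Sum>b\<in>?S. card {a\<in>?A. a \<subseteq> b})"
      by (rule dc) auto
    also have "\<dots> = (\<Sum>b\<in>?S. q + 1)"
    proof (rule sum.cong[OF refl])
      fix P assume "P \<in> ?S"
      then show "card {a\<in>?A. a \<subseteq> P} = q + 1" using c_x[of P x] SP by (auto simp: conj_assoc)
    qed
    finally show ?thesis by simp
  qed
  have 4: "(\<Sum>a\<in>?A. real (card {b\<in>?S. a \<subseteq> b})) = real (q+1) * real (card ?S)"
    using arg_cong[OF 3, of real] by (simp add: algebra_simps)
  have 5: "(\<Sum>a\<in>?A. real (card {b\<in>?S. a \<subseteq> b})^2) = (\<Sum>L\<in>?A. real (card {P\<in>S. L\<subseteq>P})^2)"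
  proof (rule sum.cong[OF refl])
    fix L assume L: "L \<in> ?A"
    have "{b\<in>?S. L \<subseteq> b} = {P\<in>S. L\<subseteq>P}" using L by auto
    then show "real (card {b\<in>?S. L \<subseteq> b})^2 = real (card {P\<in>S. L\<subseteq>P})^2" by (simp only:)
  qed
  show ?thesis using 1 unfolding 4 5 M_eq[of x] .
qed

lemma point_bd: assumes SP: "S \<subseteq> Ps"
  shows "(\<Sum>x\<in>UNIV. real (card {P\<in>S. x\<in>P})^2)
    \<le> (real (q^2) * real (card S))^2 / real (q^t) + (real RN - real mN) * real (card S)"
proof -
  have 1: "(\<Sum>x\<in>UNIV. real (card {P\<in>S. x\<in>P})^2)
    \<le> (\<Sum>x\<in>UNIV. real (card {P\<in>S. x\<in>P}))^2 / real (card (UNIV::'p set)) + (real RN - real mN) * real (card S)"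
  proof (rule tt)
    show "S \<subseteq> Ps" by (rule SP)
  next
    fix x :: 'p show "real (card {P\<in>Ps. x\<in>P}) = real RN" using R_eq by simp
  next
    fix x y :: 'p assume "x \<noteq> y"
    then show "real (card {P\<in>Ps. x\<in>P \<and> y\<in>P}) = real mN" using pair by simp
  next
    show "real mN \<le> real RN" using R_ge by simp
  qed auto
  have "(\<Sum>x\<in>UNIV. card {P\<in>S. x\<in>P}) = (\<Sum>P\<in>S. card {x\<in>UNIV. x\<in>P})"
    by (rule dc) auto
  also have "\<dots> = (\<Sum>P\<in>S. q^2)" using SP card_P by (intro sum.cong) auto
  finally have "(\<Sum>x\<in>UNIV. card {P\<in>S. x\<in>P}) = q^2 * card S" by simp
  then have "real (\<Sum>x\<in>UNIV. card {P\<in>S. x\<in>P}) = real (q^2 * card S)" by (simp only:)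
  then have "(\<Sum>x\<in>UNIV. real (card {P\<in>S. x\<in>P})) = real (q^2) * real (card S)"
    by simp
  then show ?thesis using 1 card_univ by simp
qed

lemma sum_r: assumes SP: "S \<subseteq> Ps"
  shows "(\<Sum>x\<in>UNIV. real (card {P\<in>S. x\<in>P})) = real (q^2) * real (card S)"
proof -
  have "(\<Sum>x\<in>UNIV. card {P\<in>S. x\<in>P}) = (\<Sum>P\<in>S. card {x\<in>UNIV. x\<in>P})"
    by (rule dc) auto
  also have "\<dots> = (\<Sum>P\<in>S. q^2)" using SP card_P by (intro sum.cong) auto
  finally have "(\<Sum>x\<in>UNIV. card {P\<in>S. x\<in>P}) = q^2 * card S" by simp
  then have "real (\<Sum>x\<in>UNIV. card {P\<in>S. x\<in>P}) = real (q^2 * card S)" by (simp only:)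
  then show ?thesis by simp
qed

theorem main:
  assumes SP: "S \<subseteq> Ps" and Sne: "S \<noteq> {}"
  shows "1 - real (card S) / real (card Ps) - 3 / real q
    \<le> real (card {(P,Q). P\<in>S \<and> Q\<in>Ps \<and> Q\<notin>S \<and> P\<inter>Q\<in>Ls}) / real (card {(P,Q). P\<in>S \<and> Q\<in>Ps \<and> P\<inter>Q\<in>Ls})"
proof -
  define E where "E = {(P,Q). P\<in>S \<and> Q\<in>Ps \<and> P\<inter>Q\<in>Ls}"
  define Es where "Es = {(P,Q). P\<in>S \<and> Q\<in>S \<and> P\<inter>Q\<in>Ls}"
  have EsE: "Es \<subseteq> E" using SP unfolding E_def Es_def by auto
  have numer: "{(P,Q). P\<in>S \<and> Q\<in>Ps \<and> Q\<notin>S \<and> P\<inter>Q\<in>Ls} = E - Es"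
    unfolding E_def Es_def by auto
  have finE: "finite E" by (rule finite_subset[of _ "UNIV \<times> UNIV"]) auto
  have cnum: "real (card (E - Es)) = real (card E) - real (card Es)"
    using EsE finE by (simp add: card_Diff_subset finite_subset of_nat_diff card_mono)
  define \<sigma> where "\<sigma> = real (card S)"
  define D where "D = real q*(real q+1)*(real mN-1)*\<sigma>"
  have cE: "real (card E) = D"
  proof -
    have m1: "real (mN - 1) = real mN - 1" using mN_ge by (simp add: of_nat_diff)
    have "real (card E) = real (card S) * (real q * (real q + 1) * real (mN - 1))"
      unfolding E_def card_pairs_Ps[OF SP] by (simp only: of_nat_mult of_nat_add of_nat_1)
    then show ?thesis unfolding m1 D_def \<sigma>_def by (simp add: algebra_simps)
  qed
  have s1: "1 \<le> \<sigma>" unfolding \<sigma>_def using Sne by (simp add: Suc_le_eq card_gt_0_iff)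
  have sn: "\<sigma> \<le> real (card Ps)" unfolding \<sigma>_def using SP by (simp add: card_mono)
  have Dpos: "0 < D" unfolding D_def using q2 mN_ge s1 by simp
  define X where "X = (\<Sum>L\<in>Ls. real (card {P\<in>S. L\<subseteq>P})^2)"
  define Y where "Y = (\<Sum>x\<in>UNIV. real (card {P\<in>S. x\<in>P})^2)"
  have hX: "X = real q*(real q+1)*\<sigma> + real (card Es)"
    unfolding X_def Es_def \<sigma>_def using sumsq_lines[OF SP] by (simp add: algebra_simps)
  have hY: "Y \<le> (real q^2*\<sigma>)^2/real q^t + (real RN - real mN)*\<sigma>"
    unfolding Y_def \<sigma>_def using point_bd[OF SP] by simp
  have hXY: "real q * X \<le> (real q+1)^2/real MN * Y + (real mN-1)*real q^2*\<sigma>"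
  proof -
    have "real q * X = (\<Sum>x\<in>UNIV. \<Sum>L\<in>{L\<in>Ls. x\<in>L}. real (card {P\<in>S. L\<subseteq>P})^2)"
      unfolding X_def by (rule sum_lines_points[symmetric])
    also have "\<dots> \<le> (\<Sum>x\<in>UNIV. (real (q+1) * real (card {P\<in>S. x\<in>P}))^2 / real MN + (real mN - 1) * real (card {P\<in>S. x\<in>P}))"
      by (rule sum_mono) (rule local_bd[OF SP])
    also have "\<dots> = (real q+1)^2/real MN * Y + (real mN - 1) * (\<Sum>x\<in>UNIV. real (card {P\<in>S. x\<in>P}))"
      unfolding Y_def by (simp add: sum.distrib sum_distrib_left power_mult_distrib sum_divide_distrib add.commute)
    also have "\<dots> = (real q+1)^2/real MN * Y + (real mN-1)*real q^2*\<sigma>"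
      unfolding sum_r[OF SP] \<sigma>_def by simp
    finally show ?thesis .
  qed
  have rel1: "real MN * real mN = real RN * (real q + 1)"
    using arg_cong[OF RN_rel, of real] by (simp add: algebra_simps)
  have rel2: "real (card Ps) * real q^2 = real q^t * real RN"
    using arg_cong[OF n_eq, of real] by (simp add: algebra_simps)
  have key: "real (card Es) \<le> D * \<sigma> / real (card Ps) + 3 * D / real q"
    unfolding D_def
  proof (rule final_alg[OF _ _ _ _ s1 sn _ rel1 rel2 hX hY hXY])
    show "2 \<le> real q" using q2 by simp
    show "real q + 1 \<le> real mN" using mN_ge by simp
    show "0 < real MN" using MN_pos by simp
    show "real mN \<le> real RN" using R_ge by simp
  qed simp
  have "1 - \<sigma> / real (card Ps) - 3 / real q = (D - (D * \<sigma> / real (card Ps) + 3 * D / real q)) / D"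
    using Dpos by (simp add: field_simps)
  also have "\<dots> \<le> (D - real (card Es)) / D"
    using key Dpos by (intro divide_right_mono) auto
  finally show ?thesis unfolding numer cnum cE[unfolded E_def] \<sigma>_def[symmetric]
    unfolding E_def[symmetric] cE by simp
qed

end


section \<open>Instantiation: affine geometry over a finite field\<close>

definition aline :: "'a::field ^ 'n \<Rightarrow> 'a ^ 'n \<Rightarrow> ('a ^ 'n) set" where
  "aline p u = {p + a *s u | a. True}"

definition aplane :: "'a::field ^ 'n \<Rightarrow> 'a ^ 'n \<Rightarrow> 'a ^ 'n \<Rightarrow> ('a ^ 'n) set" where
  "aplane p u v = {p + a *s u + b *s v | a b. True}"

lemma chi2: "(\<chi> i. p $ i + a * u $ i + b * v $ i) = p + a *s u + b *s v"
  by (simp add: vec_eq_iff)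

lemma chi1: "(\<chi> i. p $ i + a * u $ i) = p + a *s u"
  by (simp add: vec_eq_iff)

lemma chi0: "(\<chi> i. a * u $ i + b * v $ i) = a *s u + b *s v"
  by (simp add: vec_eq_iff)

lemma lin_indep2_iff: "lin_indep2 u v \<longleftrightarrow> (\<forall>a b. a *s u + b *s v = 0 \<longrightarrow> a = 0 \<and> b = 0)"
  unfolding lin_indep2_def chi0 ..

lemma affine_plane_iff: "affine_plane P \<longleftrightarrow> (\<exists>p u v. lin_indep2 u v \<and> P = aplane p u v)"
  unfolding affine_plane_def aplane_def chi2 ..

lemma affine_line_iff: "affine_line L \<longleftrightarrow> (\<exists>p u. u \<noteq> 0 \<and> L = aline p u)"
  unfolding affine_line_def aline_def chi1 ..

lemma smult_cancel:
  fixes u :: "'a::field ^ 'n"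
  assumes "u \<noteq> 0" "a *s u = b *s u" shows "a = b"
  using assms by simp

lemma card_aline:
  fixes u :: "'a::{field,finite} ^ 'n"
  assumes "u \<noteq> 0" shows "card (aline p u) = CARD('a)"
proof -
  have "aline p u = range (\<lambda>a. p + a *s u)" unfolding aline_def by auto
  moreover have "inj (\<lambda>a. p + a *s u)"
    by (rule injI) (use smult_cancel[OF assms] in auto)
  ultimately show ?thesis by (simp add: card_image)
qed

lemma card_aplane:
  fixes u v :: "'a::{field,finite} ^ 'n"
  assumes "lin_indep2 u v" shows "card (aplane p u v) = CARD('a)^2"
proof -
  have "aplane p u v = (\<lambda>(a,b). p + a *s u + b *s v) ` (UNIV \<times> UNIV)" unfolding aplane_def by auto
  moreover have "inj_on (\<lambda>(a,b). p + a *s u + b *s v) (UNIV \<times> UNIV)"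
  proof (rule inj_onI, clarify)
    fix a b a' b' :: 'a
    assume "p + a *s u + b *s v = p + a' *s u + b' *s v"
    then have "(a - a') *s u + (b - b') *s v = 0" by (simp add: vec_eq_iff algebra_simps)
    then have "a - a' = 0 \<and> b - b' = 0" using assms unfolding lin_indep2_iff by blast
    then show "a = a' \<and> b = b'" by simp
  qed
  ultimately show ?thesis by (simp add: card_image card_cartesian_product power2_eq_square)
qed

lemma aline_aff:
  assumes "x \<in> aline p u" "y \<in> aline p u" shows "x + c *s (y - x) \<in> aline p u"
proof -
  obtain a b where "x = p + a *s u" "y = p + b *s u" using assms unfolding aline_def by auto
  then have "x + c *s (y - x) = p + (a + c * (b - a)) *s u" by (simp add: vec_eq_iff algebra_simps)
  then show ?thesis unfolding aline_def by auto
qed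

lemma aplane_aff:
  assumes "x \<in> aplane p u v" "y \<in> aplane p u v" "z \<in> aplane p u v"
  shows "x + c *s (y - x) + d *s (z - x) \<in> aplane p u v"
proof -
  obtain a1 b1 a2 b2 a3 b3 where "x = p + a1 *s u + b1 *s v" "y = p + a2 *s u + b2 *s v" "z = p + a3 *s u + b3 *s v"
    using assms unfolding aplane_def by auto
  then have "x + c *s (y - x) + d *s (z - x) = p + (a1 + c * (a2 - a1) + d * (a3 - a1)) *s u + (b1 + c * (b2 - b1) + d * (b3 - b1)) *s v"
    by (simp add: vec_eq_iff algebra_simps)
  then show ?thesis unfolding aplane_def by auto
qed

lemma line_is_span:
  fixes L :: "('a::{field,finite} ^ 'n) set"
  assumes "affine_line L" "x \<in> L" "y \<in> L" "x \<noteq> y"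
  shows "L = aline x (y - x)"
proof -
  obtain p u where pu: "u \<noteq> 0" "L = aline p u" using assms(1) unfolding affine_line_iff by auto
  have sub: "aline x (y - x) \<subseteq> L"
  proof
    fix z assume "z \<in> aline x (y - x)"
    then obtain c where "z = x + c *s (y - x)" unfolding aline_def by auto
    then show "z \<in> L" using aline_aff[of x p u y c] assms pu by simp
  qed
  have "y - x \<noteq> 0" using assms(4) by simp
  then have "card (aline x (y - x)) = card L" using card_aline pu by metis
  then show ?thesis using sub by (intro card_subset_eq[symmetric]) auto
qed

lemma two_le_card: "2 \<le> CARD('a::{field,finite})"
proof -
  have "{0, 1::'a} \<subseteq> UNIV" by simp
  then have "card {0, 1::'a} \<le> CARD('a)" by (rule card_mono[rotated]) simp
  then show ?thesis by simp
qed

lemma geom_inst: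
  assumes "3 \<le> CARD('n)"
  shows "geom {L. affine_line L} (pvp_vertices :: ('a::{field,finite} ^ 'n) set set) CARD('a) CARD('n)"
proof
  show "CARD('a ^ 'n) = CARD('a) ^ CARD('n)" by simp
  show "2 \<le> CARD('a)" by (rule two_le_card)
  show "3 \<le> CARD('n)" by (rule assms)
next
  fix L :: "('a ^ 'n) set" assume "L \<in> {L. affine_line L}"
  then show "card L = CARD('a)" unfolding affine_line_iff by (auto simp: card_aline)
next
  fix P :: "('a ^ 'n) set" assume "P \<in> pvp_vertices"
  then show "card P = CARD('a)^2" unfolding pvp_vertices_def affine_plane_iff by (auto simp: card_aplane)
next
  fix x y :: "'a ^ 'n" assume xy: "x \<noteq> y"
  have "affine_line (aline x (y - x))" unfolding affine_line_iff
    by (rule exI[of _ x], rule exI[of _ "y - x"]) (use xy in simp)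
  moreover have "x \<in> aline x (y - x)" unfolding aline_def by (auto intro: exI[of _ 0])
  moreover have "y \<in> aline x (y - x)" unfolding aline_def
    by (rule CollectI, rule exI[of _ 1]) simp
  ultimately show "\<exists>L\<in>{L. affine_line L}. x \<in> L \<and> y \<in> L" by blast
next
  fix L L' :: "('a ^ 'n) set" and x y
  assume "L \<in> {L. affine_line L}" "L' \<in> {L. affine_line L}" "x \<in> L" "y \<in> L" "x \<in> L'" "y \<in> L'" "x \<noteq> y"
  then show "L = L'" using line_is_span[of L x y] line_is_span[of L' x y] by auto
next
  fix L :: "('a ^ 'n) set" and y
  assume L: "L \<in> {L. affine_line L}" and y: "y \<notin> L"
  obtain p u where pu: "u \<noteq> 0" "L = aline p u" using L unfolding affine_line_iff by auto
  have ind: "lin_indep2 u (y - p)" unfolding lin_indep2_iff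
  proof (intro allI impI)
    fix a b :: 'a assume h: "a *s u + b *s (y - p) = 0"
    have "b = 0"
    proof (rule ccontr)
      assume "b \<noteq> 0"
      then have "y = p + (- a / b) *s u" using h
        by (simp add: vec_eq_iff field_simps)
      then have "y \<in> L" using pu unfolding aline_def by auto
      then show False using y by simp
    qed
    then show "a = 0 \<and> b = 0" using h smult_cancel[OF pu(1), of a 0] by simp
  qed
  let ?P = "aplane p u (y - p)"
  have "?P \<in> pvp_vertices" unfolding pvp_vertices_def affine_plane_iff using ind by auto
  moreover have "L \<subseteq> ?P"
  proof
    fix z assume "z \<in> L"
    then obtain a where "z = p + a *s u" using pu unfolding aline_def by auto
    then show "z \<in> ?P" unfolding aplane_def by (rule_tac CollectI, rule_tac exI[of _ a], rule_tac exI[of _ 0]) simp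
  qed
  moreover have "y \<in> ?P" unfolding aplane_def
    by (rule CollectI, rule exI[of _ 0], rule exI[of _ 1]) (simp add: vec_eq_iff)
  ultimately show "\<exists>P\<in>pvp_vertices. L \<subseteq> P \<and> y \<in> P" by blast
next
  fix L :: "('a ^ 'n) set" and y P Q
  assume L: "L \<in> {L. affine_line L}" and y: "y \<notin> L" and P: "P \<in> pvp_vertices" and Q: "Q \<in> pvp_vertices"
    and LP: "L \<subseteq> P" "y \<in> P" and LQ: "L \<subseteq> Q" "y \<in> Q"
  obtain p u where pu: "u \<noteq> 0" "L = aline p u" using L unfolding affine_line_iff by auto
  have pL: "p \<in> L" using pu unfolding aline_def by (auto intro: exI[of _ 0])
  have "p + u = p + 1 *s u" by simp
  then have puL: "p + u \<in> L" using pu unfolding aline_def by blast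
  have gen: "R = aplane p u (y - p)" if R: "R \<in> pvp_vertices" "L \<subseteq> R" "y \<in> R" for R
  proof -
    obtain p' u' v' where R': "lin_indep2 u' v'" "R = aplane p' u' v'"
      using R(1) unfolding pvp_vertices_def affine_plane_iff by auto
    have sub: "aplane p u (y - p) \<subseteq> R"
    proof
      fix z assume "z \<in> aplane p u (y - p)"
      then obtain a b where z: "z = p + a *s u + b *s (y - p)" unfolding aplane_def by auto
      have "p + a *s ((p + u) - p) + b *s (y - p) \<in> R"
        using aplane_aff[of p p' u' v' "p + u" y a b] R R' pL puL by auto
      then show "z \<in> R" using z by simp
    qed
    have ind: "lin_indep2 u (y - p)" unfolding lin_indep2_iff
    proof (intro allI impI)
      fix a b :: 'a assume h: "a *s u + b *s (y - p) = 0"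
      have "b = 0"
      proof (rule ccontr)
        assume "b \<noteq> 0"
        have "y = p + (- a / b) *s u" using h \<open>b \<noteq> 0\<close>
          by (simp add: vec_eq_iff field_simps)
        then have "y \<in> L" using pu unfolding aline_def by auto
        then show False using y by simp
      qed
      then show "a = 0 \<and> b = 0" using h smult_cancel[OF pu(1), of a 0] by simp
    qed
    have "card (aplane p u (y - p)) = card R"
      using card_aplane[OF ind] card_aplane[OF R'(1)] R'(2) by simp
    then show ?thesis using sub by (intro card_subset_eq[symmetric]) auto
  qed
  show "P = Q" using gen[OF P LP] gen[OF Q LQ] by simp
next
  fix P :: "('a ^ 'n) set" and L x y
  assume P: "P \<in> pvp_vertices" and L: "L \<in> {L. affine_line L}" and xy: "x \<in> L" "y \<in> L" "x \<noteq> y" "x \<in> P" "y \<in> P"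
  have Leq: "L = aline x (y - x)" using line_is_span[of L x y] L xy by auto
  obtain p u v where R': "lin_indep2 u v" "P = aplane p u v"
    using P unfolding pvp_vertices_def affine_plane_iff by auto
  show "L \<subseteq> P"
  proof
    fix z assume "z \<in> L"
    then obtain c where z: "z = x + c *s (y - x)" using Leq unfolding aline_def by auto
    have "x + c *s (y - x) + 0 *s (x - x) \<in> P" using aplane_aff[of x p u v y x c 0] R' xy by auto
    then show "z \<in> P" using z by simp
  qed
qed

theorem fact2p8:
  fixes S :: "('a::{field,finite} ^ 'n) set set"
  assumes "CARD('n) \<ge> 3"
    and "S \<subseteq> pvp_vertices" and "S \<noteq> {}"
  shows "pvp_expansion S \<ge> 1 - real (card S) / real (card (pvp_vertices :: ('a ^ 'n) set set))
                              - 3 / real CARD('a)"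
proof -
  interpret g: geom "{L. affine_line L}" "pvp_vertices :: ('a ^ 'n) set set" "CARD('a)" "CARD('n)"
    by (rule geom_inst[OF assms(1)])
  have e1: "{(P, Q). P \<in> S \<and> Q \<notin> S \<and> pvp_edge P Q}
      = {(P,Q). P\<in>S \<and> Q\<in>pvp_vertices \<and> Q\<notin>S \<and> P\<inter>Q\<in>{L. affine_line L}}"
    using assms(2) unfolding pvp_edge_def by auto
  have e2: "{(P, Q). P \<in> S \<and> pvp_edge P Q}
      = {(P,Q). P\<in>S \<and> Q\<in>pvp_vertices \<and> P\<inter>Q\<in>{L. affine_line L}}"
    using assms(2) unfolding pvp_edge_def by auto
  show ?thesis
    unfolding pvp_expansion_def e1 e2 using g.main[OF assms(2,3)] by simp
qed

end
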